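(* Let $n\ge3$. (1) For any $\mathbf{p}\in\mathbb{Q}^{n!}$, there exists $\widehat{\mathbf{p}}\in\mathbb{N}_0^{n!}$ such that for every $\mathbf{w}\in\overline{W}$, the vectors $Q_{\widehat{\mathbf{p}}}\mathbf{w}$ and $Q_{\mathbf{p}}\mathbf{w}$ lie in the same face. (2) For any $\mathbf{p}\in\mathbb{Q}^{n!}$, there exists $\widetilde{\mathbf{p}}\in\mathbb{Q}^{n!}$ with $\widetilde{p}_\ell\ge 0$ for all $\ell$ and $\sum_{\ell=1}^{n!}\widetilde{p}_\ell=1$ such that for every $\mathbf{w}\in\overline{W}$, the vectors $Q_{\widetilde{\mathbf{p}}}\mathbf{w}$ and $Q_{\mathbf{p}}\mathbf{w}$ lie in the same face.
   Context: Work over $\mathbb{Q}$; $\mathbb{N}_0$ denotes the nonnegative integers. Let $\overline{W}=\{\mathbf{x}\in\mathbb{Q}^n : x_1\ge x_2\ge\cdots\ge x_n,\ x_1+\cdots+x_n=0\}$. Label the permutations of $S_n$ as $\sigma_1,\dots,\sigma_{n!}$ (lexicographically in one-line notation), let $R_\ell$ be the $n\times n$ permutation matrix with $R_\ell(i,j)=1$ iff $\sigma_\ell(j)=i$, and for $\mathbf{p}\in\mathbb{Q}^{n!}$ let $Q_{\mathbf{p}}=\sum_{\ell=1}^{n!}p_\ell R_\ell$. Two vectors $\mathbf{x},\mathbf{y}\in\mathbb{Q}^n$ lie in the same face (of the braid arrangement) iff for all $i,j\in\{1,\dots,n\}$ we have $x_i>x_j\iff y_i>y_j$ and $x_i=x_j\iff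 y_i=y_j$, i.e. they induce the same (possibly non-strict) ranking of the coordinates. *)

theory Defs
  imports Complex_Main "HOL-Combinatorics.Permutations"
begin

text \<open>Vectors in Q^n are functions nat => rat, only indices 0..n-1 matter.
  Indices are 0-based. The permutations of S_n are the permutations of {0..<n}.\<close>

definition perms :: "nat \<Rightarrow> (nat \<Rightarrow> nat) set" where
  "perms n = {\<sigma>. \<sigma> permutes {..<n}}"

definition permmat :: "(nat \<Rightarrow> nat) \<Rightarrow> nat \<Rightarrow> nat \<Rightarrow> rat" where
  "permmat \<sigma> i j = (if \<sigma> j = i then 1 else 0)"

definition Qmat :: "nat \<Rightarrow> ((nat \<Rightarrow> nat) \<Rightarrow> rat) \<Rightarrow> nat \<Rightarrow> nat \<Rightarrow> rat" where
  "Qmat n p i j = (\<Sum>\<sigma>\<in>perms n. p \<sigma> * permmat \<sigma> i j)"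

definition mat_vec :: "nat \<Rightarrow> (nat \<Rightarrow> nat \<Rightarrow> rat) \<Rightarrow> (nat \<Rightarrow> rat) \<Rightarrow> nat \<Rightarrow> rat" where
  "mat_vec n M w i = (\<Sum>j<n. M i j * w j)"

definition Wbar :: "nat \<Rightarrow> (nat \<Rightarrow> rat) set" where
  "Wbar n = {w. (\<forall>i j. i \<le> j \<longrightarrow> j < n \<longrightarrow> w j \<le> w i) \<and> (\<Sum>i<n. w i) = 0}"

definition same_face :: "nat \<Rightarrow> (nat \<Rightarrow> rat) \<Rightarrow> (nat \<Rightarrow> rat) \<Rightarrow> bool" where
  "same_face n x y = (\<forall>i<n. \<forall>j<n. (x i > x j \<longleftrightarrow> y i > y j) \<and> (x i = x j \<longleftrightarrow> y i = y j))"

end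

theory Submission
  imports Defs
begin

lemma finite_perms: "finite (perms n)"
  unfolding perms_def by (rule finite_permutations) simp

lemma id_perms: "id \<in> perms n"
  unfolding perms_def by (simp add: permutes_id)

lemma g_const:
  assumes "i < n" "k < n"
  shows "(\<Sum>\<sigma>\<in>perms n. \<Sum>j<n. permmat \<sigma> k j * w j) = (\<Sum>\<sigma>\<in>perms n. \<Sum>j<n. permmat \<sigma> i j * w j)"
proof -
  define \<tau> where "\<tau> = Transposition.transpose i k"
  have tp: "\<tau> permutes {..<n}" unfolding \<tau>_def using assms by (intro permutes_swap_id) auto
  have inv: "\<tau> \<circ> \<tau> = id" unfolding \<tau>_def by simp
  have bij: "bij_betw (\<lambda>\<sigma>. \<tau> \<circ> \<sigma>) (perms n) (perms n)"
    apply (rule bij_betw_byWitness[where f'="\<lambda>\<sigma>. \<tau> \<circ> \<sigma>"])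
    using tp inv by (auto simp: perms_def permutes_compose comp_assoc[symmetric])
  have "(\<Sum>\<sigma>\<in>perms n. \<Sum>j<n. permmat \<sigma> k j * w j) = (\<Sum>\<sigma>\<in>perms n. \<Sum>j<n. permmat (\<tau> \<circ> \<sigma>) k j * w j)"
    using sum.reindex_bij_betw[OF bij, of "\<lambda>\<sigma>. \<Sum>j<n. permmat \<sigma> k j * w j"] by simp
  also have "\<dots> = (\<Sum>\<sigma>\<in>perms n. \<Sum>j<n. permmat \<sigma> i j * w j)"
  proof -
    have "permmat (\<tau> \<circ> \<sigma>) k j = permmat \<sigma> i j" for \<sigma> j
    proof -
      have "\<tau> (\<sigma> j) = k \<longleftrightarrow> \<sigma> j = i"
        unfolding \<tau>_def by (metis transpose_apply_first transpose_apply_second transpose_apply_other)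
      thus ?thesis by (simp add: permmat_def)
    qed
    thus ?thesis by simp
  qed
  finally show ?thesis .
qed

lemma g_zero:
  assumes "w \<in> Wbar n" "i < n"
  shows "(\<Sum>\<sigma>\<in>perms n. \<Sum>j<n. permmat \<sigma> i j * w j) = 0"
proof -
  define g where "g k = (\<Sum>\<sigma>\<in>perms n. \<Sum>j<n. permmat \<sigma> k j * w j)" for k
  have "(\<Sum>k<n. g k) = (\<Sum>\<sigma>\<in>perms n. \<Sum>k<n. \<Sum>j<n. permmat \<sigma> k j * w j)"
    unfolding g_def by (rule sum.swap)
  also have "\<dots> = (\<Sum>\<sigma>\<in>perms n. \<Sum>j<n. \<Sum>k<n. permmat \<sigma> k j * w j)"
    by (rule sum.cong[OF refl], rule sum.swap)
  also have "\<dots> = (\<Sum>\<sigma>\<in>perms n. \<Sum>j<n. w j * (\<Sum>k<n. permmat \<sigma> k j))"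
    by (simp add: sum_distrib_left mult.commute)
  also have "\<dots> = (\<Sum>\<sigma>\<in>perms n. \<Sum>j<n. w j)"
  proof (rule sum.cong[OF refl], rule sum.cong[OF refl])
    fix \<sigma> j assume s: "\<sigma> \<in> perms n" and j: "j \<in> {..<n}"
    have "\<sigma> j < n" using s j permutes_in_image[of \<sigma> "{..<n}" j] by (auto simp: perms_def)
    hence "(\<Sum>k<n. permmat \<sigma> k j) = 1"
      by (simp add: permmat_def sum.delta)
    thus "w j * (\<Sum>k<n. permmat \<sigma> k j) = w j" by simp
  qed
  also have "\<dots> = 0" using assms(1) by (simp add: Wbar_def)
  finally have s0: "(\<Sum>k<n. g k) = 0" .
  have "(\<Sum>k<n. g k) = (\<Sum>k<n. g i)"
  proof (rule sum.cong[OF refl])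
    fix k assume "k \<in> {..<n}"
    thus "g k = g i" unfolding g_def by (intro g_const[OF assms(2)]) simp
  qed
  hence "of_nat n * g i = 0" using s0 by simp
  thus ?thesis using assms(2) by (simp add: g_def)
qed

lemma affine_mv:
  assumes "w \<in> Wbar n" "i < n"
  shows "mat_vec n (Qmat n (\<lambda>\<sigma>. a * p \<sigma> + b)) w i = a * mat_vec n (Qmat n p) w i"
proof -
  have "mat_vec n (Qmat n (\<lambda>\<sigma>. a * p \<sigma> + b)) w i =
      a * mat_vec n (Qmat n p) w i + b * (\<Sum>\<sigma>\<in>perms n. \<Sum>j<n. permmat \<sigma> i j * w j)"
  proof -
    have "mat_vec n (Qmat n (\<lambda>\<sigma>. a * p \<sigma> + b)) w i =
      (\<Sum>j<n. a * ((\<Sum>\<sigma>\<in>perms n. p \<sigma> * permmat \<sigma> i j) * w j) + b * (\<Sum>\<sigma>\<in>perms n. permmat \<sigma> i j * w j))"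
      unfolding mat_vec_def Qmat_def
      by (rule sum.cong[OF refl]) (simp add: algebra_simps sum.distrib sum_distrib_left sum_distrib_right)
    also have "\<dots> = a * mat_vec n (Qmat n p) w i + b * (\<Sum>j<n. \<Sum>\<sigma>\<in>perms n. permmat \<sigma> i j * w j)"
      unfolding mat_vec_def Qmat_def by (simp add: sum.distrib sum_distrib_left)
    also have "(\<Sum>j<n. \<Sum>\<sigma>\<in>perms n. permmat \<sigma> i j * w j) = (\<Sum>\<sigma>\<in>perms n. \<Sum>j<n. permmat \<sigma> i j * w j)"
      by (rule sum.swap)
    finally show ?thesis .
  qed
  thus ?thesis using g_zero[OF assms] by simp
qed

lemma same_face_scale:
  assumes "a > 0" "\<And>i. i < n \<Longrightarrow> x i = a * y i"
  shows "same_face n x y"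
  unfolding same_face_def using assms by auto

lemma Qmat_cong:
  assumes "\<And>\<sigma>. \<sigma> \<in> perms n \<Longrightarrow> p \<sigma> = q \<sigma>"
  shows "Qmat n p = Qmat n q"
  unfolding Qmat_def using assms by (intro ext sum.cong) auto

lemma common_denom:
  assumes "finite S"
  shows "\<exists>D::int. D > 0 \<and> (\<forall>x\<in>S. of_int D * (x::rat) \<in> \<int>)"
  using assms
proof (induction S rule: finite_induct)
  case empty
  then show ?case by (intro exI[of _ 1]) auto
next
  case (insert x S)
  then obtain D where D: "D > 0" "\<forall>y\<in>S. of_int D * y \<in> \<int>" by auto
  obtain a d where q: "quotient_of x = (a, d)" by (cases "quotient_of x")
  have dpos: "d > 0" using quotient_of_denom_pos[OF q] .
  have xe: "x = of_int a / of_int d" using quotient_of_div[OF q] .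
  have "of_int (D * d) * x = of_int (D * a)" using dpos xe by simp
  moreover have "of_int (D * d) * y \<in> \<int>" if "y \<in> S" for y
  proof -
    have "of_int (D * d) * y = of_int d * (of_int D * y)" by simp
    thus ?thesis using D(2) that by (metis Ints_mult Ints_of_int)
  qed
  ultimately have "of_int (D * d) * x \<in> \<int>" and "\<forall>y\<in>S. of_int (D * d) * y \<in> \<int>"
    by (metis Ints_of_int, blast)
  thus ?case using D(1) dpos
    by (intro exI[of _ "D * d"]) (simp del: of_int_mult)
qed

theorem proposition3p8:
  fixes n :: nat
  assumes "n \<ge> 3"
  shows "(\<forall>p :: (nat \<Rightarrow> nat) \<Rightarrow> rat. \<exists>ph :: (nat \<Rightarrow> nat) \<Rightarrow> nat.
            \<forall>w\<in>Wbar n. same_face n (mat_vec n (Qmat n (\<lambda>\<sigma>. of_nat (ph \<sigma>))) w)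
                                     (mat_vec n (Qmat n p) w))
       \<and> (\<forall>p :: (nat \<Rightarrow> nat) \<Rightarrow> rat. \<exists>pt :: (nat \<Rightarrow> nat) \<Rightarrow> rat.
            (\<forall>\<sigma>\<in>perms n. pt \<sigma> \<ge> 0) \<and> (\<Sum>\<sigma>\<in>perms n. pt \<sigma>) = 1 \<and>
            (\<forall>w\<in>Wbar n. same_face n (mat_vec n (Qmat n pt) w) (mat_vec n (Qmat n p) w)))"
proof (intro conjI allI)
  fix p :: "(nat \<Rightarrow> nat) \<Rightarrow> rat"
  obtain D :: int where D: "D > 0" "\<forall>x\<in>p ` perms n. of_int D * x \<in> \<int>"
    using common_denom[of "p ` perms n"] finite_perms by auto
  define M where "M = (\<Sum>\<sigma>\<in>perms n. \<bar>\<lfloor>of_int D * p \<sigma>\<rfloor>\<bar>)"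
  define ph where "ph \<sigma> = nat (\<lfloor>of_int D * p \<sigma>\<rfloor> + M)" for \<sigma>
  have eq: "of_nat (ph \<sigma>) = of_int D * p \<sigma> + of_int M" if "\<sigma> \<in> perms n" for \<sigma>
  proof -
    have le: "\<bar>\<lfloor>of_int D * p \<sigma>\<rfloor>\<bar> \<le> M"
      unfolding M_def using that finite_perms
      by (intro member_le_sum) auto
    have "of_int D * p \<sigma> \<in> \<int>" using D(2) that by auto
    then obtain z where z: "of_int D * p \<sigma> = of_int z" by (auto elim: Ints_cases)
    show ?thesis using le unfolding ph_def z by simp
  qed
  show "\<exists>ph :: (nat \<Rightarrow> nat) \<Rightarrow> nat.
            \<forall>w\<in>Wbar n. same_face n (mat_vec n (Qmat n (\<lambda>\<sigma>. of_nat (ph \<sigma>))) w)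
                                     (mat_vec n (Qmat n p) w)"
  proof (intro exI[of _ ph] ballI)
    fix w assume w: "w \<in> Wbar n"
    have "Qmat n (\<lambda>\<sigma>. of_nat (ph \<sigma>)) = Qmat n (\<lambda>\<sigma>. of_int D * p \<sigma> + of_int M)"
      using eq by (intro Qmat_cong) auto
    thus "same_face n (mat_vec n (Qmat n (\<lambda>\<sigma>. of_nat (ph \<sigma>))) w) (mat_vec n (Qmat n p) w)"
      using affine_mv[OF w] D(1) by (intro same_face_scale[of "of_int D"]) auto
  qed
next
  fix p :: "(nat \<Rightarrow> nat) \<Rightarrow> rat"
  define c where "c = 1 + (\<Sum>\<sigma>\<in>perms n. \<bar>p \<sigma>\<bar>)"
  define S where "S = (\<Sum>\<sigma>\<in>perms n. p \<sigma> + c)"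
  have pos: "p \<sigma> + c \<ge> 1" if "\<sigma> \<in> perms n" for \<sigma>
  proof -
    have "\<bar>p \<sigma>\<bar> \<le> (\<Sum>\<sigma>\<in>perms n. \<bar>p \<sigma>\<bar>)"
      using that finite_perms by (intro member_le_sum) auto
    thus ?thesis unfolding c_def by linarith
  qed
  have "S \<ge> (\<Sum>\<sigma>\<in>perms n. 1)" unfolding S_def using pos by (intro sum_mono) auto
  moreover have "(\<Sum>\<sigma>\<in>perms n. (1::rat)) \<ge> 1"
  proof -
    have "card (perms n) > 0" using card_gt_0_iff finite_perms id_perms by blast
    thus ?thesis by simp
  qed
  ultimately have Spos: "S > 0" by linarith
  define pt where "pt \<sigma> = (1 / S) * p \<sigma> + c / S" for \<sigma>
  show "\<exists>pt :: (nat \<Rightarrow> nat) \<Rightarrow> rat.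
            (\<forall>\<sigma>\<in>perms n. pt \<sigma> \<ge> 0) \<and> (\<Sum>\<sigma>\<in>perms n. pt \<sigma>) = 1 \<and>
            (\<forall>w\<in>Wbar n. same_face n (mat_vec n (Qmat n pt) w) (mat_vec n (Qmat n p) w))"
  proof (intro exI[of _ pt] conjI ballI)
    fix \<sigma> assume "\<sigma> \<in> perms n"
    hence "p \<sigma> + c \<ge> 0" using pos by fastforce
    thus "pt \<sigma> \<ge> 0" unfolding pt_def using Spos by (simp add: add_divide_distrib[symmetric])
  next
    have "(\<Sum>\<sigma>\<in>perms n. pt \<sigma>) = (\<Sum>\<sigma>\<in>perms n. (p \<sigma> + c) / S)"
      unfolding pt_def by (simp add: add_divide_distrib)
    also have "\<dots> = S / S" unfolding S_def by (rule sum_divide_distrib[symmetric])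
    finally show "(\<Sum>\<sigma>\<in>perms n. pt \<sigma>) = 1" using Spos by simp
  next
    fix w assume w: "w \<in> Wbar n"
    show "same_face n (mat_vec n (Qmat n pt) w) (mat_vec n (Qmat n p) w)"
      unfolding pt_def using affine_mv[OF w, of _ "1/S" p "c/S"] Spos
      by (intro same_face_scale[of "1/S"]) (simp_all only:, auto)
  qed
qed

end
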